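(* Let $d\ge1$, let $b:\mathbb{R}^d\to\mathbb{R}$ be continuous and bounded, and let $R>0$ be such that (1) $b$ is not constant on $\{x\in\mathbb{R}^d:|x|\le R\}$, and (2) for every $x\in\mathbb{R}^d$ with $|x|>R$ there is $z\in\mathbb{R}^d$ with $|z|\le R$ such that $b(x+y)=b(z+y)$ for all $y\in\mathbb{R}^d$. Then there is $M>0$ such that \[ \inf_{x\in\mathbb{R}^d}\int_{|y|\le M}\int_{|\overline y|\le M}|b(x+y)-b(x+\overline y)|^2\,\mathrm{d}y\,\mathrm{d}\overline y>0. \]
   Context: $|x|$ denotes the Euclidean norm on $\mathbb{R}^d$; integrals are with respect to Lebesgue measure on $\mathbb{R}^d$. *)

theory Defs
  imports "HOL-Analysis.Analysis"
begin

end

theory Submission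
  imports Defs
begin

lemma int_cont:
  fixes f :: "'a::euclidean_space \<Rightarrow> real"
  assumes f: "continuous_on UNIV f" and S: "S \<in> lmeasurable" "bounded S"
  shows "f integrable_on S"
proof -
  have "compact (closure S)" using S by (simp add: compact_closure)
  then have "bounded (f ` closure S)"
    by (meson compact_continuous_image compact_imp_bounded continuous_on_subset f subset_UNIV)
  then obtain B where B: "\<And>x. x \<in> closure S \<Longrightarrow> norm (f x) \<le> B"
    unfolding bounded_iff by blast
  have "f absolutely_integrable_on S"
  proof (rule measurable_bounded_by_integrable_imp_absolutely_integrable[where g="\<lambda>_. B"])
    show "f \<in> borel_measurable (lebesgue_on S)"
      using S by (intro continuous_imp_measurable_on_sets_lebesgue continuous_on_subset[OF f]) auto
    show "S \<in> sets lebesgue" using S by auto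
    show "(\<lambda>_. B) integrable_on S" using S by (simp add: integrable_on_const)
    show "\<And>x. x \<in> S \<Longrightarrow> norm (f x) \<le> B" using B closure_subset by blast
  qed
  then show ?thesis by (simp add: absolutely_integrable_on_def)
qed

lemma int_const:
  assumes "S \<in> lmeasurable"
  shows "integral S (\<lambda>_. c::real) = c * measure lebesgue S"
  using integral_mult_right[of S c "\<lambda>_. 1"] assms by (simp add: lmeasure_integral)

lemma cont_param:
  fixes f :: "'a::euclidean_space \<Rightarrow> 'a \<Rightarrow> real"
  assumes f: "continuous_on UNIV (\<lambda>z. f (fst z) (snd z))"
  shows "continuous_on UNIV (\<lambda>u. integral (cball 0 M) (f u))"
  unfolding continuous_on_iff
proof (intro ballI allI impI)
  fix u0 :: 'a and e :: real
  assume e: "e > 0"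
  define S where "S = cball (0::'a) M"
  define mS where "mS = measure lebesgue S"
  have mS: "mS \<ge> 0" unfolding mS_def by simp
  have fu: "continuous_on UNIV (f u)" for u
  proof -
    have "continuous_on UNIV (\<lambda>v::'a. (u,v))" by (intro continuous_intros)
    from continuous_on_compose2[OF f this] show ?thesis by simp
  qed
  have intS: "f u integrable_on S" for u
    unfolding S_def by (rule int_cont[OF fu]) auto
  have "compact (cball u0 1 \<times> S)" unfolding S_def by (intro compact_Times) auto
  then have "uniformly_continuous_on (cball u0 1 \<times> S) (\<lambda>z. f (fst z) (snd z))"
    by (intro compact_uniformly_continuous continuous_on_subset[OF f]) auto
  moreover define e' where "e' = e / (2 * (mS + 1))"
  have e': "e' > 0" using e mS unfolding e'_def by auto
  ultimately obtain d where d: "d > 0" and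
    dd: "\<And>z z'. z \<in> cball u0 1 \<times> S \<Longrightarrow> z' \<in> cball u0 1 \<times> S \<Longrightarrow> dist z' z < d \<Longrightarrow>
       dist (f (fst z') (snd z')) (f (fst z) (snd z)) < e'"
    unfolding uniformly_continuous_on_def by metis
  show "\<exists>d>0. \<forall>x'\<in>UNIV. dist x' u0 < d \<longrightarrow> dist (integral (cball 0 M) (f x')) (integral (cball 0 M) (f u0)) < e"
  proof (intro exI[of _ "min d 1"] conjI ballI impI)
    show "min d 1 > 0" using d by simp
    fix u assume u: "dist u u0 < min d 1"
    have bnd: "norm (f u v - f u0 v) \<le> e'" if v: "v \<in> S" for v
    proof -
      have "dist (f (fst (u,v)) (snd (u,v))) (f (fst (u0,v)) (snd (u0,v))) < e'"
        using u v d by (intro dd) (auto simp: dist_commute dist_Pair_Pair)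
      then show ?thesis by (simp add: dist_real_def)
    qed
    have "norm (integral S (\<lambda>v. f u v - f u0 v)) \<le> integral S (\<lambda>_. e')"
      by (rule integral_norm_bound_integral) (use intS bnd in \<open>auto simp: S_def integrable_on_const intro!: integrable_diff\<close>)
    also have "\<dots> = e' * mS" unfolding mS_def S_def by (simp add: int_const)
    also have "\<dots> < e" using e mS unfolding e'_def by (simp add: field_simps add_nonneg_pos)
    finally show "dist (integral (cball 0 M) (f u)) (integral (cball 0 M) (f u0)) < e"
      using integral_diff[OF intS intS, of u u0] by (simp add: S_def dist_norm)
  qed
qed

lemma aux: "\<bar>A - C\<bar> < \<bar>C - D\<bar>/4 \<Longrightarrow> \<bar>B - D\<bar> < \<bar>C - D\<bar>/4 \<Longrightarrow> \<bar>C - D\<bar>/2 \<le> \<bar>A - B::real\<bar>"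
  by (simp add: abs_if split: if_splits)

lemma lb_ball:
  fixes f :: "'a::euclidean_space \<Rightarrow> real"
  assumes f: "continuous_on UNIV f" and k: "\<And>v. v \<in> ball c r \<Longrightarrow> k \<le> f v"
    and nn: "\<And>v. v \<in> T \<Longrightarrow> 0 \<le> f v" and sub: "ball c r \<subseteq> T"
    and T: "T \<in> lmeasurable" "bounded T"
  shows "k * Henstock_Kurzweil_Integration.content (ball c r) \<le> integral T f"
proof -
  have "k * Henstock_Kurzweil_Integration.content (ball c r) = integral (ball c r) (\<lambda>_. k)"
    by (simp add: int_const)
  also have "\<dots> \<le> integral (ball c r) f"
    by (rule integral_le) (use k int_cont[OF f] in \<open>auto simp: integrable_on_const\<close>)
  also have "\<dots> \<le> integral T f"
    by (rule integral_subset_le) (use sub nn int_cont[OF f] T in auto)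
  finally show ?thesis .
qed

theorem lemma4p3:
  fixes b :: "'a::euclidean_space \<Rightarrow> real" and R :: real
  assumes cont: "continuous_on UNIV b"
    and bdd: "bounded (range b)"
    and Rpos: "R > 0"
    and noncon: "\<not> (\<exists>c. \<forall>x\<in>cball 0 R. b x = c)"
    and period: "\<forall>x. norm x > R \<longrightarrow> (\<exists>z. norm z \<le> R \<and> (\<forall>y. b (x + y) = b (z + y)))"
  shows "\<exists>M>0. (INF x. integral (cball 0 M) (\<lambda>y.
            integral (cball 0 M) (\<lambda>y'. \<bar>b (x + y) - b (x + y')\<bar>\<^sup>2))) > 0"
proof -
  obtain p where p: "p \<in> cball 0 R" and bp: "b p \<noteq> b 0"
    using noncon by blast
  define \<delta> where "\<delta> = \<bar>b p - b 0\<bar>"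
  have \<delta>: "\<delta> > 0" using bp unfolding \<delta>_def by simp
  obtain r1 where r1: "r1 > 0" "\<And>x'. dist x' p < r1 \<Longrightarrow> dist (b x') (b p) < \<delta>/4"
    using cont \<delta> unfolding continuous_on_iff by (metis UNIV_I divide_pos_pos zero_less_numeral)
  obtain r2 where r2: "r2 > 0" "\<And>x'. dist x' 0 < r2 \<Longrightarrow> dist (b x') (b 0) < \<delta>/4"
    using cont \<delta> unfolding continuous_on_iff by (metis UNIV_I divide_pos_pos zero_less_numeral)
  define r where "r = min r1 r2"
  have r: "r > 0" using r1 r2 unfolding r_def by simp
  define M where "M = 2 * R + r"
  have M: "M > 0" using Rpos r unfolding M_def by simp
  define V where "V = Henstock_Kurzweil_Integration.content (ball (0::'a) r)"
  have Vc: "Henstock_Kurzweil_Integration.content (ball c r) = V" for c :: 'a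
    unfolding V_def using r by (metis content_ball_conv_unit_ball less_imp_le)
  have V: "V > 0" unfolding V_def using r by simp
  define k where "k = (\<delta>/2)\<^sup>2"
  define F where "F x = integral (cball 0 M) (\<lambda>y.
            integral (cball 0 M) (\<lambda>y'. \<bar>b (x + y) - b (x + y')\<bar>\<^sup>2))" for x
  have cb: "continuous_on UNIV (\<lambda>z. b (g z))" if "continuous_on UNIV g" for g :: "'c::topological_space \<Rightarrow> 'a"
    using continuous_on_compose2[OF cont that] by simp
  have key: "k * V * V \<le> F x" if x: "x \<in> cball 0 R" for x
  proof -
    define h where "h u v = \<bar>b (x + u) - b (x + v)\<bar>\<^sup>2" for u v
    have hc: "continuous_on UNIV (\<lambda>z. h (fst z) (snd z))"
      unfolding h_def by (intro continuous_intros cb)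
    have hu: "continuous_on UNIV (h u)" for u
      unfolding h_def by (intro continuous_intros cb)
    have Gc: "continuous_on UNIV (\<lambda>u. integral (cball 0 M) (h u))"
      by (rule cont_param[OF hc])
    have big: "k \<le> h u v" if u: "u \<in> ball (p - x) r" and v: "v \<in> ball (- x) r" for u v
    proof -
      have "dist (x + u) p < r1" using u unfolding r_def by (simp add: dist_norm norm_minus_commute algebra_simps)
      then have 1: "\<bar>b (x+u) - b p\<bar> < \<delta>/4" using r1 by (simp add: dist_real_def)
      have "dist (x + v) 0 < r2" using v unfolding r_def by (simp add: dist_norm norm_minus_commute algebra_simps)
      then have 2: "\<bar>b (x+v) - b 0\<bar> < \<delta>/4" using r2 by (simp add: dist_real_def)
      have "\<delta>/2 \<le> \<bar>b (x + u) - b (x + v)\<bar>" using aux[of "b (x+u)" "b p" "b 0" "b (x+v)"] 1 2 unfolding \<delta>_def by simp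
      then show ?thesis unfolding h_def k_def using \<delta>
        by (metis abs_ge_zero dual_order.trans half_gt_zero less_eq_real_def power_mono)
    qed
    have sub: "ball (c::'a) r \<subseteq> cball 0 M" if "norm c \<le> 2 * R" for c
    proof
      fix w assume "w \<in> ball c r"
      then have "norm w \<le> norm c + r" using norm_triangle_ineq[of c "w - c"]
        by (simp add: dist_norm norm_minus_commute)
      then show "w \<in> cball 0 M" using that unfolding M_def by simp
    qed
    have n1: "norm (p - x) \<le> 2 * R" using p x norm_triangle_ineq4[of p x] by simp
    have n2: "norm (- x) \<le> 2 * R" using x Rpos by simp
    have inner: "k * V \<le> integral (cball 0 M) (h u)" if u: "u \<in> ball (p - x) r" for u
      using lb_ball[OF hu[of u] big[OF u] _ sub[OF n2]] Vc unfolding h_def by auto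
    have "k * V * V \<le> integral (cball 0 M) (\<lambda>u. integral (cball 0 M) (h u))"
    proof -
      have "\<forall>v \<in> cball 0 M. 0 \<le> h u v" for u unfolding h_def by simp
      then have "0 \<le> integral (cball 0 M) (h u)" for u
        using int_cont[OF hu[of u]] by (intro integral_nonneg) auto
      then show ?thesis
        using lb_ball[OF Gc inner _ sub[OF n1]] Vc by auto
    qed
    then show ?thesis unfolding F_def h_def .
  qed
  have kV: "k * V * V > 0" using \<delta> V unfolding k_def by simp
  have all: "k * V * V \<le> F x" for x
  proof (cases "norm x \<le> R")
    case True then show ?thesis using key by simp
  next
    case False
    then obtain z where z: "norm z \<le> R" "\<And>y. b (x + y) = b (z + y)" using period by force
    have "F x = F z" unfolding F_def z(2) ..
    then show ?thesis using key z(1) by simp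
  qed
  have "k * V * V \<le> (INF x. F x)" by (rule cINF_greatest) (use all in auto)
  then show ?thesis using kV M unfolding F_def by (intro exI[of _ M]) auto
qed

end
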